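(* For the two-pathogen model described in the context with no spillover ($s=0$) and positive parameters, if $\mathcal{R}_{0,A}>1$ and $\mathcal{R}_{0,B}>1$, then the endemic equilibrium $(S_A,I_A,\widetilde I_A,S_B,I_B,\widetilde I_B)=\bigl(1-\bar I_A-\tfrac{\tau_R}{\tau_I}\bar I_A,\ \bar I_A,\ \bar I_A,\ 1-\bar I_B-\tfrac{\tau_R}{\tau_I}\bar I_B,\ \bar I_B,\ \bar I_B\bigr)$ of the reduced system is locally asymptotically stable.
   Context: Model with no spillover: for $i\in\{A,B\}$, state variables $S_i,I_i,R_i,\widetilde I_i$ satisfy $\dot S_i=-\beta_{0,i}e^{-k\widetilde I_i} S_iI_i+R_i/\tau_R$, $\dot I_i=\beta_{0,i}e^{-k\widetilde I_i}S_iI_i-I_i/\tau_I$, $\dot R_i=I_i/\tau_I-R_i/\tau_R$, $\dot{\widetilde I}_i=(I_i-\widetilde I_i)/\tau_P$, with $S_i+I_i+R_i=1$. All parameters $\beta_{0,A},\beta_{0,B},\tau_I,\tau_R,\tau_P,k$ are positive. $\mathcal{R}_{0,i}=\beta_{0,i}\tau_I$. For $\mathcal{R}_{0,i}>1$, $\bar I_i$ denotes the unique positive solution of $e^{kI}=\beta_{0,i}\tau_I-\beta_{0,i}(\tau_I+\tau_R)I$. The reduced system is obtained by substituting $R_i=1-S_i-I_i$ and keeping only the equations for $S_i,I_i,\widetilde I_i$. Locally asymptotically stable means all eigenvalues of the Jacobian of the reduced system at the equilibrium have negative real part. *)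

theory Defs
  imports "HOL-Analysis.Analysis" "HOL-Library.Numeral_Type"
begin

text \<open>State vector of the reduced system, indexed by the 6-element type:
  component 0 = S_A, 1 = I_A, 2 = tilde I_A, 3 = S_B, 4 = I_B, 5 = tilde I_B.
  R_i is eliminated via R_i = 1 - S_i - I_i.\<close>

definition R0 :: "real \<Rightarrow> real \<Rightarrow> real" where
  "R0 \<beta> \<tau>I = \<beta> * \<tau>I"

definition dS :: "real \<Rightarrow> real \<Rightarrow> real \<Rightarrow> real \<Rightarrow> real \<Rightarrow> real \<Rightarrow> real \<Rightarrow> real" where
  "dS \<beta> \<tau>I \<tau>R k S I T = - \<beta> * exp (- k * T) * S * I + (1 - S - I) / \<tau>R"

definition dI :: "real \<Rightarrow> real \<Rightarrow> real \<Rightarrow> real \<Rightarrow> real \<Rightarrow> real \<Rightarrow> real" where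
  "dI \<beta> \<tau>I k S I T = \<beta> * exp (- k * T) * S * I - I / \<tau>I"

definition dT :: "real \<Rightarrow> real \<Rightarrow> real \<Rightarrow> real" where
  "dT \<tau>P I T = (I - T) / \<tau>P"

definition reduced_field ::
  "real \<Rightarrow> real \<Rightarrow> real \<Rightarrow> real \<Rightarrow> real \<Rightarrow> real \<Rightarrow> real^6 \<Rightarrow> real^6" where
  "reduced_field \<beta>A \<beta>B \<tau>I \<tau>R \<tau>P k x = (\<chi> i.
     if i = 0 then dS \<beta>A \<tau>I \<tau>R k (x$0) (x$1) (x$2)
     else if i = 1 then dI \<beta>A \<tau>I k (x$0) (x$1) (x$2)
     else if i = 2 then dT \<tau>P (x$1) (x$2)
     else if i = 3 then dS \<beta>B \<tau>I \<tau>R k (x$3) (x$4) (x$5)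
     else if i = 4 then dI \<beta>B \<tau>I k (x$3) (x$4) (x$5)
     else dT \<tau>P (x$4) (x$5))"

definition Ibar :: "real \<Rightarrow> real \<Rightarrow> real \<Rightarrow> real \<Rightarrow> real" where
  "Ibar \<beta> \<tau>I \<tau>R k = (THE I. I > 0 \<and> exp (k * I) = \<beta> * \<tau>I - \<beta> * (\<tau>I + \<tau>R) * I)"

definition endemic_eq :: "real \<Rightarrow> real \<Rightarrow> real \<Rightarrow> real \<Rightarrow> real \<Rightarrow> real^6" where
  "endemic_eq \<beta>A \<beta>B \<tau>I \<tau>R k = (let IA = Ibar \<beta>A \<tau>I \<tau>R k; IB = Ibar \<beta>B \<tau>I \<tau>R k in
     (\<chi> i. if i = 0 then 1 - IA - \<tau>R / \<tau>I * IA
       else if i = 1 then IA else if i = 2 then IA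
       else if i = 3 then 1 - IB - \<tau>R / \<tau>I * IB
       else if i = 4 then IB else IB))"

definition complexify :: "real^'n^'n \<Rightarrow> complex^'n^'n" where
  "complexify A = (\<chi> i j. complex_of_real (A$i$j))"

definition is_eigenvalue :: "complex^'n^'n \<Rightarrow> complex \<Rightarrow> bool" where
  "is_eigenvalue A c \<longleftrightarrow> (\<exists>v. v \<noteq> 0 \<and> A *v v = c *s v)"

definition locally_asymptotically_stable :: "(real^'n \<Rightarrow> real^'n) \<Rightarrow> real^'n \<Rightarrow> bool" where
  "locally_asymptotically_stable F x0 \<longleftrightarrow>
     (\<exists>J. (F has_derivative (\<lambda>h. J *v h)) (at x0) \<and>
          (\<forall>c. is_eigenvalue (complexify J) c \<longrightarrow> Re c < 0))"

end

theory Submission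
  imports Defs
begin
lemma six_cases: "(i::6) = 0 \<or> i = 1 \<or> i = 2 \<or> i = 3 \<or> i = 4 \<or> i = 5"
proof (induct i rule: bit0.induct)
  case (1 z)
  then have "z < 6" by simp
  with 1 have "z = 0 \<or> z = 1 \<or> z = 2 \<or> z = 3 \<or> z = 4 \<or> z = 5" by linarith
  then show ?case by (elim disjE) simp_all
qed

lemma UNIV6: "(UNIV::6 set) = {0,1,2,3,4,5}" using six_cases by blast

lemma sum6: "sum (f::6\<Rightarrow>'a::comm_monoid_add) UNIV = f 0 + f 1 + f 2 + f 3 + f 4 + f 5"
  unfolding UNIV6 by (simp add: add.assoc)

definition "j00 \<beta> \<tau>R k S I T = -(\<beta>*exp(-k*T)*I) - 1/\<tau>R"
definition "j01 \<beta> \<tau>R k S I T = -(\<beta>*exp(-k*T)*S) - 1/\<tau>R"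
definition "j02 \<beta> k S I T = \<beta>*k*exp(-k*T)*S*I"
definition "j10 \<beta> k S I T = \<beta>*exp(-k*T)*I"
definition "j11 \<beta> \<tau>I k S I T = \<beta>*exp(-k*T)*S - 1/\<tau>I"
definition "j12 \<beta> k S I T = -(\<beta>*k*exp(-k*T)*S*I)"

lemma vec_nth_deriv[derivative_intros]: "((\<lambda>x::real^'n. x $ i) has_derivative (\<lambda>h. h $ i)) F"
  by (rule bounded_linear.has_derivative[OF bounded_linear_vec_nth has_derivative_ident])

lemma dS_deriv: assumes "\<tau>R \<noteq> 0" shows "((\<lambda>x. dS \<beta> \<tau>I \<tau>R k (x$a) (x$b) (x$c)) has_derivative
   (\<lambda>h. j00 \<beta> \<tau>R k (x0$a) (x0$b) (x0$c) * h$a + j01 \<beta> \<tau>R k (x0$a) (x0$b) (x0$c) * h$b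
     + j02 \<beta> k (x0$a) (x0$b) (x0$c) * h$c)) (at x0)"
  unfolding dS_def j00_def j01_def j02_def
  by (rule derivative_eq_intros refl | simp add: assms)+ (auto simp: fun_eq_iff algebra_simps diff_divide_distrib assms)

lemma dI_deriv: assumes "\<tau>I \<noteq> 0" shows "((\<lambda>x. dI \<beta> \<tau>I k (x$a) (x$b) (x$c)) has_derivative
   (\<lambda>h. j10 \<beta> k (x0$a) (x0$b) (x0$c) * h$a + j11 \<beta> \<tau>I k (x0$a) (x0$b) (x0$c) * h$b
     + j12 \<beta> k (x0$a) (x0$b) (x0$c) * h$c)) (at x0)"
  unfolding dI_def j10_def j11_def j12_def
  by (rule derivative_eq_intros refl | simp add: assms)+ (auto simp: fun_eq_iff algebra_simps diff_divide_distrib assms)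

lemma dT_deriv: assumes "\<tau>P \<noteq> 0" shows "((\<lambda>x. dT \<tau>P (x$b) (x$c)) has_derivative
   (\<lambda>h. h$b / \<tau>P - h$c / \<tau>P)) (at x0)"
  unfolding dT_def diff_divide_distrib
  by (auto intro!: derivative_eq_intros simp: assms)

definition jac :: "real \<Rightarrow> real \<Rightarrow> real \<Rightarrow> real \<Rightarrow> real \<Rightarrow> real \<Rightarrow> real^6 \<Rightarrow> real^6^6" where
  "jac \<beta>A \<beta>B \<tau>I \<tau>R \<tau>P k x = (\<chi> i j.
     if i = 0 then (if j = 0 then j00 \<beta>A \<tau>R k (x$0) (x$1) (x$2) else if j = 1 then j01 \<beta>A \<tau>R k (x$0) (x$1) (x$2)
        else if j = 2 then j02 \<beta>A k (x$0) (x$1) (x$2) else 0)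
     else if i = 1 then (if j = 0 then j10 \<beta>A k (x$0) (x$1) (x$2) else if j = 1 then j11 \<beta>A \<tau>I k (x$0) (x$1) (x$2)
        else if j = 2 then j12 \<beta>A k (x$0) (x$1) (x$2) else 0)
     else if i = 2 then (if j = 1 then 1/\<tau>P else if j = 2 then -1/\<tau>P else 0)
     else if i = 3 then (if j = 3 then j00 \<beta>B \<tau>R k (x$3) (x$4) (x$5) else if j = 4 then j01 \<beta>B \<tau>R k (x$3) (x$4) (x$5)
        else if j = 5 then j02 \<beta>B k (x$3) (x$4) (x$5) else 0)
     else if i = 4 then (if j = 3 then j10 \<beta>B k (x$3) (x$4) (x$5) else if j = 4 then j11 \<beta>B \<tau>I k (x$3) (x$4) (x$5)
        else if j = 5 then j12 \<beta>B k (x$3) (x$4) (x$5) else 0)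
     else (if j = 4 then 1/\<tau>P else if j = 5 then -1/\<tau>P else 0))"

lemma field_deriv:
  assumes "\<tau>I \<noteq> 0" "\<tau>R \<noteq> 0" "\<tau>P \<noteq> 0"
  shows "(reduced_field \<beta>A \<beta>B \<tau>I \<tau>R \<tau>P k has_derivative (\<lambda>h. jac \<beta>A \<beta>B \<tau>I \<tau>R \<tau>P k x0 *v h)) (at x0)"
proof -
  have "((\<lambda>x. reduced_field \<beta>A \<beta>B \<tau>I \<tau>R \<tau>P k x $ j) has_derivative
         (\<lambda>h. (jac \<beta>A \<beta>B \<tau>I \<tau>R \<tau>P k x0 *v h) $ j)) (at x0)" for j
    using six_cases[of j]
    apply (elim disjE)
         apply (simp_all add: reduced_field_def jac_def matrix_vector_mult_def sum6)
         apply (rule dS_deriv, simp add: assms)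
         apply (rule dI_deriv, simp add: assms)
         apply (rule dT_deriv, simp add: assms)
         apply (rule dS_deriv, simp add: assms)
         apply (rule dI_deriv, simp add: assms)
         apply (rule dT_deriv, simp add: assms)
    done
  note D = this
  show ?thesis
  proof (rule iffD2[OF has_derivative_componentwise_within], intro ballI)
    fix b :: "real^6" assume "b \<in> Basis"
    then obtain j where b: "b = axis j 1" by (auto simp: Basis_vec_def)
    have e: "\<And>y::real^6. y \<bullet> b = y $ j" unfolding b by (simp add: inner_axis)
    show "((\<lambda>x. reduced_field \<beta>A \<beta>B \<tau>I \<tau>R \<tau>P k x \<bullet> b) has_derivative
          (\<lambda>h. (jac \<beta>A \<beta>B \<tau>I \<tau>R \<tau>P k x0 *v h) \<bullet> b)) (at x0)"
      unfolding e by (rule D)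
  qed
qed
lemma Ibar_prop:
  assumes b: "\<beta> > 0" and tI: "\<tau>I > 0" and tR: "\<tau>R > 0" and k: "k > 0" and R: "\<beta> * \<tau>I > 1"
  shows "Ibar \<beta> \<tau>I \<tau>R k > 0 \<and> exp (k * Ibar \<beta> \<tau>I \<tau>R k) = \<beta> * \<tau>I - \<beta> * (\<tau>I + \<tau>R) * Ibar \<beta> \<tau>I \<tau>R k"
proof -
  define g where "g x = exp (k * x) - \<beta> * \<tau>I + \<beta> * (\<tau>I + \<tau>R) * x" for x
  define u where "u = \<tau>I / (\<tau>I + \<tau>R)"
  have u0: "0 \<le> u" using tI tR by (simp add: u_def)
  have g0: "g 0 \<le> 0" using R by (simp add: g_def)
  have gu: "0 \<le> g u" using tI tR by (simp add: g_def u_def)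
  have cont: "\<forall>x. 0 \<le> x \<and> x \<le> u \<longrightarrow> isCont g x" unfolding g_def by (auto intro!: continuous_intros)
  obtain x where x: "0 \<le> x" "x \<le> u" "g x = 0" using IVT[of g 0 0 u, OF g0 gu u0 cont] by blast
  have mono: "g y < g z" if "y < z" for y z
  proof -
    have e: "exp (k*y) < exp (k*z)" using that k by simp
    have l: "\<beta> * (\<tau>I + \<tau>R) * y < \<beta> * (\<tau>I + \<tau>R) * z" using that b tI tR by simp
    show ?thesis using e l unfolding g_def by linarith
  qed
  have "x \<noteq> 0" using x R by (auto simp: g_def)
  with x have xp: "x > 0" by simp
  have P: "x > 0 \<and> exp (k * x) = \<beta> * \<tau>I - \<beta> * (\<tau>I + \<tau>R) * x" using xp x(3) by (simp add: g_def algebra_simps)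
  have U: "y = x" if "y > 0 \<and> exp (k * y) = \<beta> * \<tau>I - \<beta> * (\<tau>I + \<tau>R) * y" for y
  proof -
    have "g y = 0" using that by (simp add: g_def)
    then show ?thesis using mono[of y x] mono[of x y] x(3) by (cases "y < x"; cases "x < y") auto
  qed
  have "Ibar \<beta> \<tau>I \<tau>R k = x" unfolding Ibar_def apply (rule the_equality) apply (rule P) apply (erule U) done
  with P show ?thesis by simp
qed

lemma cubic_stable:
  fixes c :: complex and c2 c1 c0 :: real
  assumes "c2 > 0" "c1 > 0" "c0 > 0" "c2 * c1 > c0"
    and eq: "c^3 + of_real c2 * c^2 + of_real c1 * c + of_real c0 = 0"
  shows "Re c < 0"
proof (rule ccontr)
  assume "\<not> Re c < 0"
  then have x0: "Re c \<ge> 0" by simp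
  obtain x y where c: "c = Complex x y" by (cases c)
  with x0 have x: "x \<ge> 0" by simp
  have re: "x^3 - 3*x*y^2 + c2*(x^2 - y^2) + c1*x + c0 = 0"
    using arg_cong[OF eq, of Re] unfolding c by (simp add: power2_eq_square power3_eq_cube algebra_simps)
  have im: "y * (3*x^2 - y^2 + 2*c2*x + c1) = 0"
    using arg_cong[OF eq, of Im] unfolding c by (simp add: power2_eq_square power3_eq_cube algebra_simps)
  show False
  proof (cases "y = 0")
    case True
    with re have "x^3 + c2*x^2 + c1*x + c0 = 0" by simp
    moreover have "x^3 \<ge> 0" "c2*x^2 \<ge> 0" "c1 * x \<ge> 0" using x assms by auto
    ultimately show False using assms by linarith
  next
    case False
    with im have y2: "y^2 = 3*x^2 + 2*c2*x + c1" by simp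
    have "-8*x^3 - 8*c2*x^2 - (2*c1 + 2*c2^2)*x + (c0 - c2*c1) = 0"
      using re unfolding y2 by (simp add: algebra_simps power2_eq_square power3_eq_cube)
    moreover have "x^3 \<ge> 0" "c2*x^2 \<ge> 0" "(2*c1 + 2*c2^2)*x \<ge> 0" using x assms by auto
    ultimately show False using assms by linarith
  qed
qed
lemma block_core:
  fixes a q r m p :: real and c v0 v1 v2 :: complex
  assumes pos: "a > 0" "q > 0" "r > 0" "m > 0" "p > 0"
    and e1: "(-(of_real a + of_real r) - c) * v0 - (of_real q + of_real r) * v1 + of_real m * v2 = 0"
    and e2: "of_real a * v0 - c * v1 - of_real m * v2 = 0"
    and e3: "of_real p * v1 - (c + of_real p) * v2 = 0"
    and nz: "v0 \<noteq> 0 \<or> v1 \<noteq> 0 \<or> v2 \<noteq> 0"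
  shows "Re c < 0"
proof -
  have v2: "v2 \<noteq> 0"
  proof
    assume "v2 = 0"
    with e3 pos have "v1 = 0" by simp
    with e2 \<open>v2 = 0\<close> pos have "v0 = 0" by simp
    with nz \<open>v1 = 0\<close> \<open>v2 = 0\<close> show False by simp
  qed
  define c2 where "c2 = p + a + r"
  define c1 where "c1 = p*m + a*p + r*p + a*q + a*r"
  define c0 where "c0 = r*p*m + a*p*q + a*p*r"
  define A where "A = (of_real a :: complex)"
  define Q where "Q = (of_real q :: complex)"
  define R where "R = (of_real r :: complex)"
  define M where "M = (of_real m :: complex)"
  define P where "P = (of_real p :: complex)"
  have E1: "(-(A + R) - c) * v0 - (Q + R) * v1 + M * v2 = 0" using e1 by (simp add: A_def R_def Q_def M_def)
  have E2: "A * v0 - c * v1 - M * v2 = 0" using e2 by (simp add: A_def M_def)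
  have E3: "P * v1 - (c + P) * v2 = 0" using e3 by (simp add: P_def)
  have id: "(c^3 + (P+A+R) * c^2 + (P*M + A*P + R*P + A*Q + A*R) * c + (R*P*M + A*P*Q + A*P*R)) * v2
     = -(A*P) * ((-(A + R) - c) * v0 - (Q + R) * v1 + M * v2)
       - (A+R+c)*P * (A * v0 - c * v1 - M * v2)
       - ((A+R+c)*c + (Q+R)*A) * (P * v1 - (c + P) * v2)"
    by (simp add: algebra_simps power2_eq_square power3_eq_cube)
  have "(c^3 + (P+A+R) * c^2 + (P*M + A*P + R*P + A*Q + A*R) * c + (R*P*M + A*P*Q + A*P*R)) * v2 = 0"
    unfolding id E1 E2 E3 by simp
  with v2 have ch: "c^3 + (P+A+R) * c^2 + (P*M + A*P + R*P + A*Q + A*R) * c + (R*P*M + A*P*Q + A*P*R) = 0"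
    by simp
  have ch': "c^3 + of_real c2 * c^2 + of_real c1 * c + of_real c0 = 0"
    using ch by (simp add: c2_def c1_def c0_def A_def Q_def R_def M_def P_def)
  have d: "c2 * c1 - c0 = p*(p*m+a*p+r*p+a*r) + a*(p*m+a*p+a*q+a*r) + r*(a*p+r*p+a*q+a*r)"
    by (simp add: c2_def c1_def c0_def algebra_simps)
  have "0 < p*(p*m+a*p+r*p+a*r)" "0 < a*(p*m+a*p+a*q+a*r)" "0 < r*(a*p+r*p+a*q+a*r)"
    using pos by (simp_all add: add_pos_pos)
  with d have "c2 * c1 > c0" by linarith
  moreover have "c2 > 0" "c1 > 0" "c0 > 0" using pos by (simp_all add: c2_def c1_def c0_def add_pos_pos)
  ultimately show ?thesis using cubic_stable ch' by blast
qed

lemma block_stable: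
  fixes \<beta> \<tau>I \<tau>R \<tau>P k I S :: real and c v0 v1 v2 :: complex
  assumes pos: "\<beta> > 0" "\<tau>I > 0" "\<tau>R > 0" "\<tau>P > 0" "k > 0" "I > 0"
    and eqI: "exp (k * I) = \<beta> * \<tau>I - \<beta> * (\<tau>I + \<tau>R) * I"
    and S: "S = 1 - I - \<tau>R / \<tau>I * I"
    and e1: "of_real (j00 \<beta> \<tau>R k S I I) * v0 + of_real (j01 \<beta> \<tau>R k S I I) * v1 + of_real (j02 \<beta> k S I I) * v2 = c * v0"
    and e2: "of_real (j10 \<beta> k S I I) * v0 + of_real (j11 \<beta> \<tau>I k S I I) * v1 + of_real (j12 \<beta> k S I I) * v2 = c * v1"
    and e3: "of_real (1/\<tau>P) * v1 + of_real (-1/\<tau>P) * v2 = c * v2"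
    and nz: "v0 \<noteq> 0 \<or> v1 \<noteq> 0 \<or> v2 \<noteq> 0"
  shows "Re c < 0"
proof -
  define E where "E = exp (-k * I)"
  have "\<beta> * \<tau>I * S = \<beta> * \<tau>I - \<beta> * (\<tau>I + \<tau>R) * I" unfolding S using pos by (simp add: field_simps)
  with eqI have eS: "exp (k * I) = \<beta> * \<tau>I * S" by simp
  have "E * exp (k * I) = 1" unfolding E_def by (simp add: exp_minus field_simps)
  then have "E * (\<beta> * \<tau>I * S) = 1" unfolding eS .
  then have bes: "\<beta> * E * S = 1 / \<tau>I"
    using pos by (simp add: field_simps)
  define a where "a = \<beta> * E * I"
  have a: "a > 0" using pos by (simp add: a_def E_def)
  have J00: "j00 \<beta> \<tau>R k S I I = -(a + 1/\<tau>R)" unfolding j00_def E_def[symmetric] a_def by simp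
  have J01: "j01 \<beta> \<tau>R k S I I = -(1/\<tau>I + 1/\<tau>R)" unfolding j01_def E_def[symmetric] bes by simp
  have "\<beta>*k*E*S*I = (\<beta>*E*S)*(k*I)" by (simp add: algebra_simps)
  then have J02: "j02 \<beta> k S I I = k*I/\<tau>I" unfolding j02_def E_def[symmetric] bes by simp
  have J10: "j10 \<beta> k S I I = a" unfolding j10_def E_def[symmetric] a_def by simp
  have J11: "j11 \<beta> \<tau>I k S I I = 0" unfolding j11_def E_def[symmetric] bes by simp
  have J12: "j12 \<beta> k S I I = -(k*I/\<tau>I)" using J02 unfolding j12_def j02_def by simp
  define q where "q = 1/\<tau>I"
  define r where "r = 1/\<tau>R"
  define m where "m = k*I/\<tau>I"
  define p where "p = 1/\<tau>P"
  have mp: "-1/\<tau>P = -p" by (simp add: p_def)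
  show ?thesis
  proof (rule block_core[of a q r m p c v0 v1 v2])
    show "(-(of_real a + of_real r) - c) * v0 - (of_real q + of_real r) * v1 + of_real m * v2 = 0"
      using e1 unfolding J00 J01 J02 q_def[symmetric] r_def[symmetric] m_def[symmetric]
      by (simp add: algebra_simps)
    show "of_real a * v0 - c * v1 - of_real m * v2 = 0"
      using e2 unfolding J10 J11 J12 m_def[symmetric] by (simp add: algebra_simps)
    show "of_real p * v1 - (c + of_real p) * v2 = 0"
      using e3 unfolding mp p_def[symmetric] by (simp add: algebra_simps)
  qed (use a pos nz in \<open>auto simp: q_def r_def m_def p_def\<close>)
qed
theorem theorem5:
  fixes \<beta>A \<beta>B \<tau>I \<tau>R \<tau>P k :: real
  assumes "\<beta>A > 0" "\<beta>B > 0" "\<tau>I > 0" "\<tau>R > 0" "\<tau>P > 0" "k > 0"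
    and "R0 \<beta>A \<tau>I > 1" "R0 \<beta>B \<tau>I > 1"
  shows "locally_asymptotically_stable (reduced_field \<beta>A \<beta>B \<tau>I \<tau>R \<tau>P k)
           (endemic_eq \<beta>A \<beta>B \<tau>I \<tau>R k)"
proof -
  note pos = assms(1-6)
  define IA where "IA = Ibar \<beta>A \<tau>I \<tau>R k"
  define IB where "IB = Ibar \<beta>B \<tau>I \<tau>R k"
  define SA where "SA = 1 - IA - \<tau>R / \<tau>I * IA"
  define SB where "SB = 1 - IB - \<tau>R / \<tau>I * IB"
  have HA: "IA > 0 \<and> exp (k * IA) = \<beta>A * \<tau>I - \<beta>A * (\<tau>I + \<tau>R) * IA"
    unfolding IA_def using Ibar_prop[of \<beta>A \<tau>I \<tau>R k] assms by (simp add: R0_def)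
  have HB: "IB > 0 \<and> exp (k * IB) = \<beta>B * \<tau>I - \<beta>B * (\<tau>I + \<tau>R) * IB"
    unfolding IB_def using Ibar_prop[of \<beta>B \<tau>I \<tau>R k] assms by (simp add: R0_def)
  define x0 where "x0 = endemic_eq \<beta>A \<beta>B \<tau>I \<tau>R k"
  have x0: "x0$0 = SA" "x0$1 = IA" "x0$2 = IA" "x0$3 = SB" "x0$4 = IB" "x0$5 = IB"
    by (simp_all add: x0_def endemic_eq_def Let_def SA_def SB_def IA_def IB_def)
  define J where "J = jac \<beta>A \<beta>B \<tau>I \<tau>R \<tau>P k x0"
  show ?thesis
    unfolding locally_asymptotically_stable_def x0_def[symmetric]
  proof (intro exI conjI allI impI)
    show "(reduced_field \<beta>A \<beta>B \<tau>I \<tau>R \<tau>P k has_derivative (\<lambda>h. J *v h)) (at x0)"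
      unfolding J_def by (rule field_deriv) (use pos in auto)
  next
    fix c assume "is_eigenvalue (complexify J) c"
    then obtain v where v: "v \<noteq> 0" "complexify J *v v = c *s v" by (auto simp: is_eigenvalue_def)
    have comp: "(complexify J *v v) $ i = c * v $ i" for i using v(2) by simp
    note C = comp[unfolded matrix_vector_mult_def complexify_def J_def jac_def, simplified, unfolded sum6, simplified, unfolded x0]
    have a1: "of_real (j00 \<beta>A \<tau>R k SA IA IA) * v$0 + of_real (j01 \<beta>A \<tau>R k SA IA IA) * v$1 + of_real (j02 \<beta>A k SA IA IA) * v$2 = c * v$0"
      using C[of 0] by simp
    have a2: "of_real (j10 \<beta>A k SA IA IA) * v$0 + of_real (j11 \<beta>A \<tau>I k SA IA IA) * v$1 + of_real (j12 \<beta>A k SA IA IA) * v$2 = c * v$1"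
      using C[of 1] by simp
    have a3: "of_real (1/\<tau>P) * v$1 + of_real (-1/\<tau>P) * v$2 = c * v$2"
      using C[of 2] by simp
    have b1: "of_real (j00 \<beta>B \<tau>R k SB IB IB) * v$3 + of_real (j01 \<beta>B \<tau>R k SB IB IB) * v$4 + of_real (j02 \<beta>B k SB IB IB) * v$5 = c * v$3"
      using C[of 3] by simp
    have b2: "of_real (j10 \<beta>B k SB IB IB) * v$3 + of_real (j11 \<beta>B \<tau>I k SB IB IB) * v$4 + of_real (j12 \<beta>B k SB IB IB) * v$5 = c * v$4"
      using C[of 4] by simp
    have b3: "of_real (1/\<tau>P) * v$4 + of_real (-1/\<tau>P) * v$5 = c * v$5"
      using C[of 5] by simp
    have "\<exists>i. v $ i \<noteq> 0" using v(1) by (metis vec_eq_iff zero_index)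
    then have "(v$0 \<noteq> 0 \<or> v$1 \<noteq> 0 \<or> v$2 \<noteq> 0) \<or> (v$3 \<noteq> 0 \<or> v$4 \<noteq> 0 \<or> v$5 \<noteq> 0)"
      using six_cases by metis
    then show "Re c < 0"
    proof
      assume "v$0 \<noteq> 0 \<or> v$1 \<noteq> 0 \<or> v$2 \<noteq> 0"
      then show ?thesis
        using block_stable[OF assms(1) assms(3-6) HA[THEN conjunct1] HA[THEN conjunct2] SA_def a1 a2 a3] by blast
    next
      assume "v$3 \<noteq> 0 \<or> v$4 \<noteq> 0 \<or> v$5 \<noteq> 0"
      then show ?thesis
        using block_stable[OF assms(2) assms(3-6) HB[THEN conjunct1] HB[THEN conjunct2] SB_def b1 b2 b3] by blast
    qed
  qed
qed
end
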